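(* Let $\mathcal{A}$ be a finite poset, $V$ a vector space and $(\pi_a)_{a\in\mathcal{A}}$ a family of projectors ($\pi_a^2=\pi_a$) of $V$. Then $(\pi_a)_{a\in\mathcal{A}}$ satisfies the intersection property if and only if it is decomposable.
   Context: For a family $(\pi_a)_{a\in\mathcal{A}}$ of endomorphisms of $V$ indexed by a finite poset, let $(s_a)_{a\in\mathcal{A}}$ be the unique family of endomorphisms with $\pi_a=\sum_{b\le a}s_b$ for all $a$ (Möbius inversion). Intersection property: for all $a,b\in\mathcal{A}$, $\pi_a\pi_b=\sum_{c\le a,\ c\le b}s_c$ (for a meet semilattice this is $\pi_a\pi_b=\pi_{a\wedge b}$). Let $\mathcal{A}^+$ be $\mathcal{A}$ with a new greatest element $1$ adjoined. The family is decomposable if there are subspaces $(S_a)_{a\in\mathcal{A}^+}$ of $V$ such that the summation map $\bigoplus_{a\in\mathcal{A}^+}S_a\to V$ is an isomorphism and for every $a\in\mathcal{A}$ and every $(w_b)\in\bigoplus_{b\in\mathcal{A}^+}S_b$, $\pi_a(\sum_b w_b)=\sum_{b\le a}w_b$. *)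

theory Defs
  imports Complex_Main
begin

definition mobius_inv :: "('a::{finite,order} \<Rightarrow> 'v \<Rightarrow> 'v::ab_group_add) \<Rightarrow> 'a \<Rightarrow> 'v \<Rightarrow> 'v" where
  "mobius_inv \<pi> = (THE s. \<forall>a v. \<pi> a v = (\<Sum>b\<in>{b. b \<le> a}. s b v))"

definition intersection_property :: "('a::{finite,order} \<Rightarrow> 'v \<Rightarrow> 'v::ab_group_add) \<Rightarrow> bool" where
  "intersection_property \<pi> \<longleftrightarrow>
     (\<forall>a b v. \<pi> a (\<pi> b v) = (\<Sum>c\<in>{c. c \<le> a \<and> c \<le> b}. mobius_inv \<pi> c v))"

text \<open>A^+ is modelled as 'a option: Some a is the element a of A, None is the new greatest
  element 1. The elements of A^+ below a (for a in A) are exactly Some b with b <= a.\<close>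
definition decomposable ::
  "('k::field \<Rightarrow> 'v \<Rightarrow> 'v::ab_group_add) \<Rightarrow> ('a::{finite,order} \<Rightarrow> 'v \<Rightarrow> 'v) \<Rightarrow> bool" where
  "decomposable scale \<pi> \<longleftrightarrow>
     (\<exists>S :: 'a option \<Rightarrow> 'v set.
        (\<forall>b. module.subspace scale (S b)) \<and>
        (\<forall>v. \<exists>!w. (\<forall>b. w b \<in> S b) \<and> (\<Sum>b\<in>UNIV. w b) = v) \<and>
        (\<forall>a w. (\<forall>b. w b \<in> S b) \<longrightarrow>
            \<pi> a (\<Sum>b\<in>UNIV. w b) = (\<Sum>b\<in>{b. b \<le> a}. w (Some b))))"

end

theory Submission
  imports Defs
begin

lemma fin_less_induct:
  fixes a :: "'a::{finite,order}"
  assumes step: "\<And>a. (\<And>b. b < a \<Longrightarrow> P b) \<Longrightarrow> P a"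
  shows "P a"
proof (induction "card {b. b < a}" arbitrary: a rule: less_induct)
  case less
  show ?case
  proof (rule step)
    fix b assume "b < a"
    have "{c. c < b} \<subset> {c. c < a}" using \<open>b < a\<close> by auto
    hence "card {c. c < b} < card {c. c < a}" by (intro psubset_card_mono) auto
    thus "P b" using less by blast
  qed
qed

function mi :: "('a::{finite,order} \<Rightarrow> 'v \<Rightarrow> 'v::ab_group_add) \<Rightarrow> 'a \<Rightarrow> 'v \<Rightarrow> 'v" where
  "mi p a v = p a v - (\<Sum>b\<in>{b. b < a}. mi p b v)"
  by auto
termination
  by (relation "measure (\<lambda>(p,a,v). card {b. b < a})") (auto intro!: psubset_card_mono)

declare mi.simps[simp del]

lemma le_split: "{b. b \<le> (a::'a::order)} = insert a {b. b < a}" by auto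

lemma mi_sum: "p a v = (\<Sum>b\<in>{b. b \<le> a}. mi p b v)"
  by (subst le_split, subst sum.insert) (auto simp: mi.simps[of p a v])

lemma mi_unique:
  assumes "\<forall>a v. p a v = (\<Sum>b\<in>{b. b \<le> a}. s b v)"
  shows "s = mi p"
proof (intro ext)
  fix a v
  show "s a v = mi p a v"
  proof (induction a rule: fin_less_induct)
    case (1 a)
    have "p a v = s a v + (\<Sum>b\<in>{b. b < a}. s b v)"
      using assms by (simp add: le_split)
    hence "s a v = p a v - (\<Sum>b\<in>{b. b < a}. s b v)" by (simp add: algebra_simps)
    also have "\<dots> = p a v - (\<Sum>b\<in>{b. b < a}. mi p b v)" using 1 by simp
    finally show ?case by (simp add: mi.simps[of p a v])
  qed
qed

lemma mobius_eq: "mobius_inv p = mi p"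
  unfolding mobius_inv_def
proof (rule the_equality)
  show "\<forall>a v. p a v = (\<Sum>b\<in>{b. b \<le> a}. mi p b v)" by (intro allI, rule mi_sum)
next
  fix s assume "\<forall>a v. p a v = (\<Sum>b\<in>{b. b \<le> a}. s b v)"
  thus "s = mi p" by (rule mi_unique)
qed

lemma sum_option: fixes f :: "'a::finite option \<Rightarrow> 'b::comm_monoid_add"
  shows "(\<Sum>b\<in>UNIV. f b) = f None + (\<Sum>a\<in>UNIV. f (Some a))"
proof -
  have 1: "(UNIV :: 'a option set) = insert None (range Some)" by (auto intro: option.exhaust)
  have "(\<Sum>b\<in>UNIV. f b) = sum f (insert None (range Some))" by (metis 1)
  also have "\<dots> = f None + sum f (range Some)" by (rule sum.insert) auto
  also have "sum f (range Some) = (\<Sum>a\<in>UNIV. f (Some a))"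
    by (subst sum.reindex) auto
  finally show ?thesis .
qed

lemma lin_add:
  assumes "Vector_Spaces.linear scale scale f"
  shows "f (x + y) = f x + f y"
  using assms[unfolded Vector_Spaces.linear_iff] by blast

lemma lin_scale:
  assumes "Vector_Spaces.linear scale scale f"
  shows "f (scale c x) = scale c (f x)"
  using assms[unfolded Vector_Spaces.linear_iff] by blast

lemma add_facts:
  fixes f :: "'u::ab_group_add \<Rightarrow> 'v::ab_group_add"
  assumes "\<forall>x y. f (x + y) = f x + f y"
  shows "f 0 = 0" "f (x - y) = f x - f y" "f (sum g A) = (\<Sum>i\<in>A. f (g i))"
proof -
  interpret additive f using assms by unfold_locales blast
  show "f 0 = 0" "f (x - y) = f x - f y" "f (sum g A) = (\<Sum>i\<in>A. f (g i))"
    by (rule zero, rule diff, rule sum)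
qed

theorem theorem3:
  fixes scale :: "'k::field \<Rightarrow> 'v \<Rightarrow> 'v::ab_group_add"
    and \<pi> :: "'a::{finite,order} \<Rightarrow> 'v \<Rightarrow> 'v"
  assumes "vector_space scale"
    and "\<forall>a. Vector_Spaces.linear scale scale (\<pi> a)"
    and "\<forall>a. \<pi> a \<circ> \<pi> a = \<pi> a"
  shows "intersection_property \<pi> \<longleftrightarrow> decomposable scale \<pi>"
proof -
  interpret vs: vector_space scale by (rule assms(1))
  define s where "s = mobius_inv \<pi>"
  have s_eq: "s = mi \<pi>" by (simp add: s_def mobius_eq)
  have pi_sum: "\<And>a v. \<pi> a v = (\<Sum>b\<in>{b. b \<le> a}. s b v)" unfolding s_eq by (rule mi_sum)
  have s_rec: "\<And>a v. s a v = \<pi> a v - (\<Sum>b\<in>{b. b < a}. s b v)"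
    unfolding s_eq by (rule mi.simps)
  have padd: "\<And>a x y. \<pi> a (x + y) = \<pi> a x + \<pi> a y" using assms(2) lin_add by blast
  have pscale: "\<And>a c x. \<pi> a (scale c x) = scale c (\<pi> a x)" using assms(2) lin_scale by blast
  have pdiff: "\<And>a x y. \<pi> a (x - y) = \<pi> a x - \<pi> a y"
    using add_facts(2) padd by blast
  have psum: "\<And>a g A. \<pi> a (sum g A) = (\<Sum>i\<in>A. \<pi> a (g i))"
    using add_facts(3) padd by blast
  have sadd: "\<forall>x y. s a (x + y) = s a x + s a y" for a
  proof (induction a rule: fin_less_induct)
    case (1 a)
    show ?case
    proof (intro allI)
      fix x y
      have "s a (x + y) = \<pi> a (x + y) - (\<Sum>b\<in>{b. b < a}. s b (x + y))" by (rule s_rec)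
      also have "\<dots> = (\<pi> a x - (\<Sum>b\<in>{b. b < a}. s b x)) + (\<pi> a y - (\<Sum>b\<in>{b. b < a}. s b y))"
        using 1 by (simp add: padd sum.distrib algebra_simps)
      also have "\<dots> = s a x + s a y" by (simp add: s_rec[of a x] s_rec[of a y])
      finally show "s a (x + y) = s a x + s a y" .
    qed
  qed
  have s0: "\<And>a. s a 0 = 0" using add_facts(1) sadd by blast
  have sdiff: "\<And>a x y. s a (x - y) = s a x - s a y"
    using add_facts(2) sadd by blast
  have ssum: "\<And>a g A. s a (sum g A) = (\<Sum>i\<in>A. s a (g i))"
    using add_facts(3) sadd by blast
  have sscale: "\<forall>c x. s a (scale c x) = scale c (s a x)" for a
  proof (induction a rule: fin_less_induct)
    case (1 a)
    show ?case
    proof (intro allI)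
      fix c x
      have "s a (scale c x) = \<pi> a (scale c x) - (\<Sum>b\<in>{b. b < a}. s b (scale c x))" by (rule s_rec)
      also have "\<dots> = scale c (\<pi> a x) - (\<Sum>b\<in>{b. b < a}. scale c (s b x))"
        using 1 by (simp add: pscale)
      also have "\<dots> = scale c (\<pi> a x - (\<Sum>b\<in>{b. b < a}. s b x))"
        by (simp add: vs.scale_right_diff_distrib vs.scale_sum_right)
      also have "\<dots> = scale c (s a x)" by (simp add: s_rec[of a x])
      finally show "s a (scale c x) = scale c (s a x)" .
    qed
  qed
  show ?thesis
  proof
    assume ip: "intersection_property \<pi>"
    hence ip': "\<And>a b v. \<pi> a (\<pi> b v) = (\<Sum>c\<in>{c. c \<le> a \<and> c \<le> b}. s c v)"
      unfolding intersection_property_def s_def by blast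
    have F1: "\<forall>a v. \<pi> a (s b v) = (if b \<le> a then s b v else 0)" for b
    proof (induction b rule: fin_less_induct)
      case (1 b)
      show ?case
      proof (intro allI)
        fix a v
        have "\<pi> a (s b v) = \<pi> a (\<pi> b v - (\<Sum>c\<in>{c. c < b}. s c v))" by (simp only: s_rec[of b v])
        also have "\<dots> = (\<Sum>c\<in>{c. c \<le> a \<and> c \<le> b}. s c v) - (\<Sum>c\<in>{c. c < b}. if c \<le> a then s c v else 0)"
          using 1 by (simp add: pdiff psum ip')
        also have "(\<Sum>c\<in>{c. c < b}. if c \<le> a then s c v else 0) = (\<Sum>c\<in>{c. c < b \<and> c \<le> a}. s c v)"
          by (subst sum.inter_filter[symmetric]) auto
        finally have eq: "\<pi> a (s b v) = (\<Sum>c\<in>{c. c \<le> a \<and> c \<le> b}. s c v) - (\<Sum>c\<in>{c. c < b \<and> c \<le> a}. s c v)" .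
        show "\<pi> a (s b v) = (if b \<le> a then s b v else 0)"
        proof (cases "b \<le> a")
          case True
          have "{c. c \<le> a \<and> c \<le> b} = insert b {c. c < b \<and> c \<le> a}" using True by auto
          hence "(\<Sum>c\<in>{c. c \<le> a \<and> c \<le> b}. s c v) = s b v + (\<Sum>c\<in>{c. c < b \<and> c \<le> a}. s c v)"
            by (simp add: sum.insert)
          thus ?thesis using eq True by simp
        next
          case False
          have "{c. c \<le> a \<and> c \<le> b} = {c. c < b \<and> c \<le> a}" using False by (auto simp: order.strict_iff_order)
          thus ?thesis using eq False by simp
        qed
      qed
    qed
    have F2: "\<forall>b v. s a (s b v) = (if a = b then s b v else 0)" for a
    proof (induction a rule: fin_less_induct)
      case (1 a)
      show ?case
      proof (intro allI)
        fix b v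
        have "s a (s b v) = \<pi> a (s b v) - (\<Sum>c\<in>{c. c < a}. s c (s b v))" by (rule s_rec)
        also have "\<dots> = (if b \<le> a then s b v else 0) - (\<Sum>c\<in>{c. c < a}. if c = b then s b v else 0)"
          using 1 F1 by simp
        also have "\<dots> = (if a = b then s b v else 0)"
          by (auto simp: sum.delta order.strict_iff_order)
        finally show "s a (s b v) = (if a = b then s b v else 0)" .
      qed
    qed
    define S where "S = (\<lambda>ob. case ob of Some a \<Rightarrow> {x. s a x = x} | None \<Rightarrow> {x. \<forall>a. s a x = 0})"
    show "decomposable scale \<pi>"
      unfolding decomposable_def
    proof (intro exI[of _ S] conjI allI impI)
      fix b
      show "vs.subspace (S b)"
        by (cases b) (auto simp: S_def vs.subspace_def s0 sadd sscale)
    next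
      fix v
      define w0 where "w0 = (\<lambda>ob. case ob of Some a \<Rightarrow> s a v | None \<Rightarrow> v - (\<Sum>a\<in>UNIV. s a v))"
      show "\<exists>!w. (\<forall>b. w b \<in> S b) \<and> (\<Sum>b\<in>UNIV. w b) = v"
      proof (rule ex1I[of _ w0])
        have "w0 b \<in> S b" for b
        proof (cases b)
          case None
          have "s a (v - (\<Sum>c\<in>UNIV. s c v)) = 0" for a
            by (simp add: sdiff ssum F2)
          thus ?thesis using None by (simp add: S_def w0_def)
        next
          case (Some a)
          thus ?thesis by (simp add: S_def w0_def F2)
        qed
        moreover have "(\<Sum>b\<in>UNIV. w0 b) = v" by (simp add: sum_option w0_def)
        ultimately show "(\<forall>b. w0 b \<in> S b) \<and> (\<Sum>b\<in>UNIV. w0 b) = v" by blast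
      next
        fix w assume hw: "(\<forall>b. w b \<in> S b) \<and> (\<Sum>b\<in>UNIV. w b) = v"
        have wN: "s a (w None) = 0" for a using hw[THEN conjunct1, rule_format, of None] by (simp add: S_def)
        have wS: "s c (w (Some c)) = w (Some c)" for c using hw[THEN conjunct1, rule_format, of "Some c"] by (auto simp: S_def)
        have key: "s a v = w (Some a)" for a
        proof -
          have "s a v = s a (w None + (\<Sum>c\<in>UNIV. w (Some c)))" using hw sum_option[of w] by simp
          also have "\<dots> = (\<Sum>c\<in>UNIV. s a (w (Some c)))" by (simp add: sadd ssum wN)
          also have "\<dots> = (\<Sum>c\<in>UNIV. if a = c then w (Some c) else 0)"
          proof (rule sum.cong[OF refl])
            fix c
            have "s a (w (Some c)) = s a (s c (w (Some c)))" by (simp only: wS)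
            also have "\<dots> = (if a = c then s c (w (Some c)) else 0)" using F2 by blast
            finally show "s a (w (Some c)) = (if a = c then w (Some c) else 0)" by (simp add: wS)
          qed
          also have "\<dots> = w (Some a)" by simp
          finally show ?thesis .
        qed
        have vsum: "v = w None + (\<Sum>c\<in>UNIV. w (Some c))" using hw sum_option[of w] by simp
        show "w = w0"
        proof
          fix b show "w b = w0 b"
          proof (cases b)
            case None
            have "w0 None = v - (\<Sum>a\<in>UNIV. w (Some a))" by (simp add: w0_def key)
            thus ?thesis using None vsum by simp
          next
            case (Some a)
            thus ?thesis by (simp add: w0_def key)
          qed
        qed
      qed
    next
      fix a w assume hw: "\<forall>b. w b \<in> S b"
      have wN: "s c (w None) = 0" for c using hw[rule_format, of None] by (simp add: S_def)
      have wS: "s c (w (Some c)) = w (Some c)" for c using hw[rule_format, of "Some c"] by (auto simp: S_def)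
      have "\<pi> a (\<Sum>b\<in>UNIV. w b) = \<pi> a (w None) + (\<Sum>c\<in>UNIV. \<pi> a (s c (w (Some c))))"
        by (simp add: sum_option padd psum wS)
      also have "\<pi> a (w None) = 0" by (simp add: pi_sum[of a] wN)
      also have "(\<Sum>c\<in>UNIV. \<pi> a (s c (w (Some c)))) = (\<Sum>c\<in>UNIV. if c \<le> a then w (Some c) else 0)"
        by (intro sum.cong refl) (subst F1[rule_format], simp add: wS)
      also have "\<dots> = (\<Sum>c\<in>{c. c \<le> a}. w (Some c))"
        by (subst sum.inter_filter[symmetric]) auto
      finally show "\<pi> a (\<Sum>b\<in>UNIV. w b) = (\<Sum>b\<in>{b. b \<le> a}. w (Some b))" by simp
    qed
  next
    assume "decomposable scale \<pi>"
    then obtain S :: "'a option \<Rightarrow> 'v set" where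
      Ssub: "\<forall>b. vs.subspace (S b)" and
      Suniq: "\<forall>v. \<exists>!w. (\<forall>b. w b \<in> S b) \<and> (\<Sum>b\<in>UNIV. w b) = v" and
      Spi: "\<forall>a w. (\<forall>b. w b \<in> S b) \<longrightarrow> \<pi> a (\<Sum>b\<in>UNIV. w b) = (\<Sum>b\<in>{b. b \<le> a}. w (Some b))"
      unfolding decomposable_def by blast
    from Suniq have "\<forall>v. \<exists>w. (\<forall>b. w b \<in> S b) \<and> (\<Sum>b\<in>UNIV. w b) = v" by blast
    then have "\<exists>W. \<forall>v. (\<forall>b. W v b \<in> S b) \<and> (\<Sum>b\<in>UNIV. W v b) = v"
      by (rule choice)
    then obtain W where W': "\<forall>v. (\<forall>b. W v b \<in> S b) \<and> (\<Sum>b\<in>UNIV. W v b) = v"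
      by (elim exE)
    have W: "(\<forall>b. W v b \<in> S b) \<and> (\<Sum>b\<in>UNIV. W v b) = v" for v
      using W' by (rule spec)
    have Wpi: "\<pi> a v = (\<Sum>b\<in>{b. b \<le> a}. W v (Some b))" for a v
    proof -
      have "\<pi> a v = \<pi> a (\<Sum>b\<in>UNIV. W v b)" using W[of v] by simp
      also have "\<dots> = (\<Sum>b\<in>{b. b \<le> a}. W v (Some b))" using Spi W by blast
      finally show ?thesis .
    qed
    have sW: "s = (\<lambda>b v. W v (Some b))"
      unfolding s_eq by (rule mi_unique[symmetric]) (simp add: Wpi)
    have S0: "0 \<in> S b" for b using Ssub by (simp add: vs.subspace_def)
    show "intersection_property \<pi>"
      unfolding intersection_property_def s_def[symmetric]
    proof (intro allI)
      fix a b v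
      define w' where "w' = (\<lambda>ob. case ob of Some c \<Rightarrow> if c \<le> b then W v (Some c) else 0 | None \<Rightarrow> 0)"
      have w'S: "\<forall>ob. w' ob \<in> S ob"
      proof
        fix ob show "w' ob \<in> S ob" using W S0 by (cases ob) (auto simp: w'_def)
      qed
      have "\<pi> b v = (\<Sum>c\<in>UNIV. if c \<le> b then W v (Some c) else 0)"
        by (simp add: Wpi sum.inter_filter[symmetric])
      also have "\<dots> = (\<Sum>ob\<in>UNIV. w' ob)" by (simp add: sum_option w'_def)
      finally have "\<pi> a (\<pi> b v) = \<pi> a (\<Sum>ob\<in>UNIV. w' ob)" by simp
      also have "\<dots> = (\<Sum>c\<in>{c. c \<le> a}. w' (Some c))" using Spi w'S by blast
      also have "\<dots> = (\<Sum>c\<in>{c. c \<le> a}. if c \<le> b then s c v else 0)" unfolding sW w'_def by simp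
      also have "\<dots> = (\<Sum>c\<in>{c. c \<le> a \<and> c \<le> b}. s c v)"
        by (subst sum.inter_filter[symmetric]) (auto intro: sum.cong)
      finally show "\<pi> a (\<pi> b v) = (\<Sum>c\<in>{c. c \<le> a \<and> c \<le> b}. s c v)" .
    qed
  qed
qed

end
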